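(* Let $C$ be a convex subset of a real topological vector space $X$. Call two faces $F,G$ of $C$ closure-equivalent if $\overline F=\overline G$, and for each closure-equivalence class $\mathcal K$ of faces of $C$ let $U_{\mathcal K}=\bigcup_{F\in\mathcal K}\operatorname{fri} F$. Then $C=\bigcup_{\mathcal K}U_{\mathcal K}$, the union being over all closure-equivalence classes, and $U_{\mathcal K}\cap U_{\mathcal K'}=\emptyset$ whenever $\mathcal K\neq\mathcal K'$.
   Context: For a convex set $C$, a convex subset $F\subseteq C$ is a face of $C$ if for every $x\in F$ and all $y,z\in C$ with $x\in(y,z)=\{(1-t)y+tz:t\in(0,1)\}$ we have $y,z\in F$; $F_{\min}(x,C)$ is the intersection of all faces of $C$ containing $x\in C$. The face relative interior of a convex set $D$ is $\operatorname{fri} D=\{x\in D: D\subseteq\overline{F_{\min}(x,D)}\}$. *)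

theory Defs
  imports "HOL-Analysis.Analysis"
begin

text \<open>Real topological vector space: additive topological group with jointly
continuous scalar multiplication (no separation axiom assumed).\<close>
class topological_real_vector = real_vector + topological_ab_group_add +
  assumes tendsto_scaleR_Pair:
    "LIM p (nhds c \<times>\<^sub>F nhds a). fst p *\<^sub>R snd p :> nhds (c *\<^sub>R a)"

definition Fmin :: "'a::real_vector \<Rightarrow> 'a set \<Rightarrow> 'a set" where
  "Fmin x C = \<Inter>{F. F face_of C \<and> x \<in> F}"

definition fri :: "'a::{real_vector,topological_space} set \<Rightarrow> 'a set" where
  "fri D = {x \<in> D. D \<subseteq> closure (Fmin x D)}"

definition closure_equiv_classes :: "'a::{real_vector,topological_space} set \<Rightarrow> 'a set set set" where
  "closure_equiv_classes C =
     {{G. G face_of C \<and> closure G = closure F} | F. F face_of C}"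

definition Ucls :: "'a::{real_vector,topological_space} set set \<Rightarrow> 'a set" where
  "Ucls K = (\<Union>F\<in>K. fri F)"

end

theory Submission
  imports Defs
begin

lemma Fmin_face:
  assumes "convex C" "x \<in> C"
  shows "Fmin x C face_of C" "x \<in> Fmin x C"
proof -
  have ne: "{F. F face_of C \<and> x \<in> F} \<noteq> {}" using assms face_of_refl by blast
  show "Fmin x C face_of C" unfolding Fmin_def by (rule face_of_Inter[OF ne]) blast
  show "x \<in> Fmin x C" unfolding Fmin_def by blast
qed

lemma Fmin_sub:
  assumes "F face_of C" "x \<in> F"
  shows "Fmin x C \<subseteq> F"
  using assms unfolding Fmin_def by blast

lemma Fmin_face_eq:
  assumes "F face_of C" "x \<in> F"
  shows "Fmin x F = Fmin x C"
proof
  show "Fmin x C \<subseteq> Fmin x F"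
    unfolding Fmin_def using assms face_of_trans by blast
  show "Fmin x F \<subseteq> Fmin x C"
    unfolding Fmin_def
  proof (rule Inter_greatest)
    fix H assume "H \<in> {F. F face_of C \<and> x \<in> F}"
    hence H: "H face_of C" "x \<in> H" by auto
    have "(H \<inter> F) face_of F"
      using face_of_subset[OF face_of_Int[OF H(1) assms(1)]] face_of_imp_subset[OF assms(1)] by blast
    hence "\<Inter>{G. G face_of F \<and> x \<in> G} \<subseteq> H \<inter> F" using H assms by blast
    thus "\<Inter>{G. G face_of F \<and> x \<in> G} \<subseteq> H" by blast
  qed
qed

lemma fri_closure:
  assumes "F face_of C" "x \<in> fri F"
  shows "closure F = closure (Fmin x C)"
proof -
  have x: "x \<in> F" "F \<subseteq> closure (Fmin x F)" using assms(2) unfolding fri_def by auto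
  have e: "Fmin x F = Fmin x C" using Fmin_face_eq[OF assms(1) x(1)] .
  have "Fmin x C \<subseteq> F" using Fmin_sub[OF assms(1) x(1)] .
  hence "closure (Fmin x C) \<subseteq> closure F" by (rule closure_mono)
  moreover have "closure F \<subseteq> closure (Fmin x C)"
    using x(2) e by (metis closure_closure closure_mono)
  ultimately show ?thesis by blast
qed

theorem theorem5p3:
  fixes C :: "'a::topological_real_vector set"
  assumes "convex C"
  shows "C = (\<Union>K\<in>closure_equiv_classes C. Ucls K) \<and>
         (\<forall>K\<in>closure_equiv_classes C. \<forall>K'\<in>closure_equiv_classes C.
           K \<noteq> K' \<longrightarrow> Ucls K \<inter> Ucls K' = {})"
proof (intro conjI ballI impI)
  show "C = (\<Union>K\<in>closure_equiv_classes C. Ucls K)"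
  proof
    show "C \<subseteq> (\<Union>K\<in>closure_equiv_classes C. Ucls K)"
    proof
      fix x assume xC: "x \<in> C"
      define F where "F = Fmin x C"
      have F: "F face_of C" "x \<in> F" using Fmin_face[OF assms xC] F_def by auto
      have "Fmin x F = F" using Fmin_face_eq[OF F] F_def by simp
      hence "x \<in> fri F" using F closure_subset unfolding fri_def by auto
      moreover have "F \<in> {G. G face_of C \<and> closure G = closure F}" using F by auto
      moreover have "{G. G face_of C \<and> closure G = closure F} \<in> closure_equiv_classes C"
        unfolding closure_equiv_classes_def using F by blast
      ultimately show "x \<in> (\<Union>K\<in>closure_equiv_classes C. Ucls K)"
        unfolding Ucls_def by blast
    qed
    show "(\<Union>K\<in>closure_equiv_classes C. Ucls K) \<subseteq> C"
      unfolding Ucls_def closure_equiv_classes_def fri_def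
      using face_of_imp_subset by blast
  qed
next
  fix K K' assume K: "K \<in> closure_equiv_classes C" and K': "K' \<in> closure_equiv_classes C"
    and ne: "K \<noteq> K'"
  obtain F0 where F0: "K = {G. G face_of C \<and> closure G = closure F0}"
    using K unfolding closure_equiv_classes_def by blast
  obtain F1 where F1: "K' = {G. G face_of C \<and> closure G = closure F1}"
    using K' unfolding closure_equiv_classes_def by blast
  show "Ucls K \<inter> Ucls K' = {}"
  proof (rule ccontr)
    assume "Ucls K \<inter> Ucls K' \<noteq> {}"
    then obtain x F G where "F \<in> K" "G \<in> K'" "x \<in> fri F" "x \<in> fri G"
      unfolding Ucls_def by blast
    hence h: "F face_of C" "G face_of C" "closure F = closure F0" "closure G = closure F1"
      using F0 F1 by auto
    have "closure F = closure (Fmin x C)" "closure G = closure (Fmin x C)"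
      using fri_closure[OF h(1) \<open>x \<in> fri F\<close>] fri_closure[OF h(2) \<open>x \<in> fri G\<close>] by auto
    note h = h this
    hence "closure F0 = closure F1" using h by simp
    hence "K = K'" using F0 F1 by simp
    thus False using ne by simp
  qed
qed

end
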